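(* Let $c>0$, $d\ge 2$, $m\ge 0$ with $m+\frac d2>1$. Let $\phi_k$ be a real solution, bounded on $[-1,1]$, of $$\big((1-\eta)(1+\eta)^{m+\frac d2}\phi_k'(\eta)\big)'+\Big(\alpha_k-\frac{c^2(1+\eta)}{8}\Big)(1+\eta)^{m+\frac d2-1}\phi_k(\eta)=0,\qquad \eta\in(-1,1),$$ normalized by $\int_{-1}^1(1+t)^{m+\frac d2-1}|\phi_k(t)|^2dt=2^{m+\frac d2-1}$. If $\alpha_k>\frac{c^2}{4}$, then $$\sup_{\eta\in[a_{m,d},1]}\sqrt{(1-\eta)(1+\eta)^{m+\frac d2}}\,|\phi_k(\eta)|\le\sqrt{2^{m+\frac d2+1}\big(m+\tfrac d2-1\big)},\qquad a_{m,d}=\frac{2m+d-2}{2m+d}.$$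
   Context: This is the radial equation of ball prolate spheroidal wave functions $\psi(x)=r^m\phi_k(2r^2-1)Y(\hat x)$, where $\alpha_k=\frac14(\chi^{(m)}_k(c)-m(m+d))$ and $\chi^{(m)}_k(c)$ is the corresponding eigenvalue of $\mathcal{L}_c=-\nabla\cdot(1-\|x\|^2)\nabla-\Delta_0+c^2\|x\|^2$. *)

theory Defs
  imports "HOL-Analysis.Analysis"
begin

end

theory Submission
  imports Defs
begin


lemma energy_deriv:
  fixes \<phi> P R S :: "real \<Rightarrow> real"
  assumes "(\<phi> has_real_derivative \<phi>1) (at t)"
    and "(P has_real_derivative (-(Bt * \<phi> t))) (at t)"
    and "P t = At * \<phi>1"
    and "(R has_real_derivative R1) (at t)"
    and "(S has_real_derivative S1) (at t)"
    and "R t = S t * At * Bt"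
  shows "((\<lambda>u. R u * (\<phi> u)\<^sup>2 + S u * (P u)\<^sup>2) has_real_derivative (R1 * (\<phi> t)\<^sup>2 + S1 * (P t)\<^sup>2)) (at t)"
proof -
  have d: "((\<lambda>u. R u * (\<phi> u)\<^sup>2 + S u * (P u)\<^sup>2) has_real_derivative
     (R1 * (\<phi> t)\<^sup>2 + R t * (2 * \<phi> t * \<phi>1) + (S1 * (P t)\<^sup>2 + S t * (2 * P t * (-(Bt * \<phi> t)))))) (at t)"
    using assms(1,2,4,5)
    by (auto intro!: derivative_eq_intros simp: power2_eq_square algebra_simps)
  have "R t * (2 * \<phi> t * \<phi>1) + S t * (2 * P t * (-(Bt * \<phi> t))) = 0"
    using assms(3,6) by (simp add: algebra_simps)
  then have eq: "R1 * (\<phi> t)\<^sup>2 + R t * (2 * \<phi> t * \<phi>1) + (S1 * (P t)\<^sup>2 + S t * (2 * P t * (-(Bt * \<phi> t))))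
     = R1 * (\<phi> t)\<^sup>2 + S1 * (P t)\<^sup>2" by (simp add: algebra_simps)
  show ?thesis using d by (simp only: eq)
qed

lemma sign_const:
  fixes P :: "real \<Rightarrow> real"
  assumes cont: "\<forall>u\<in>{a<..<b}. isCont P u" and big: "\<forall>u\<in>{a<..<b}. \<bar>P u\<bar> \<ge> \<epsilon>" and ep: "\<epsilon> > 0"
  shows "(\<forall>u\<in>{a<..<b}. P u \<ge> \<epsilon>) \<or> (\<forall>u\<in>{a<..<b}. P u \<le> -\<epsilon>)"
proof (rule ccontr)
  assume "\<not> ?thesis"
  then obtain u1 u2 where u1: "u1 \<in> {a<..<b}" "\<not> P u1 \<ge> \<epsilon>" and u2: "u2 \<in> {a<..<b}" "\<not> P u2 \<le> -\<epsilon>"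
    by blast
  have "\<bar>P u1\<bar> \<ge> \<epsilon>" using big u1(1) by blast
  then have p1: "P u1 \<le> 0" using u1(2) by linarith
  have "\<bar>P u2\<bar> \<ge> \<epsilon>" using big u2(1) by blast
  then have p2: "P u2 \<ge> 0" using u2(2) by linarith
  have zero: False if "x \<in> {a<..<b}" "P x = 0" for x
  proof -
    have "\<bar>P x\<bar> \<ge> \<epsilon>" using big that(1) by blast
    then show False using that(2) ep by simp
  qed
  show False
  proof (cases "u1 \<le> u2")
    case True
    have "continuous_on {u1..u2} P"
      using u1(1) u2(1) cont by (intro continuous_at_imp_continuous_on) auto
    then obtain x where x: "u1 \<le> x" "x \<le> u2" "P x = 0"
      using IVT'[of P u1 0 u2] p1 p2 True by blast
    have "x \<in> {a<..<b}" using x u1(1) u2(1) by auto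
    then show False using zero x(3) by blast
  next
    case False
    have "continuous_on {u2..u1} P"
      using u1(1) u2(1) cont False by (intro continuous_at_imp_continuous_on) auto
    then obtain x where x: "u2 \<le> x" "x \<le> u1" "P x = 0"
      using IVT2'[of P u1 0 u2] p1 p2 False by fastforce
    have "x \<in> {a<..<b}" using x u1(1) u2(1) by auto
    then show False using zero x(3) by blast
  qed
qed

lemma blowup_right:
  fixes g g' :: "real \<Rightarrow> real"
  assumes s1: "s1 < 1" and k: "k > 0"
    and d: "\<forall>u\<in>{s1..<1}. (g has_real_derivative g' u) (at u) \<and> g' u \<ge> k / (1 - u)"
  shows "\<exists>s. s1 \<le> s \<and> s < 1 \<and> g s \<ge> g s1 + K"
proof -
  define s where "s = 1 - (1 - s1) * exp (- \<bar>K\<bar> / k)"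
  have ex: "exp (- \<bar>K\<bar> / k) \<le> 1" "exp (- \<bar>K\<bar> / k) > 0" using k by auto
  have "(1 - s1) * exp (- \<bar>K\<bar> / k) \<le> (1 - s1)"
    by (rule mult_left_le) (use ex s1 in auto)
  then have ss1: "s1 \<le> s" unfolding s_def by linarith
  have s1': "s < 1" using ex s1 unfolding s_def by simp
  define h where "h u = g u + k * ln (1 - u)" for u
  have der: "(h has_real_derivative g' x - k / (1 - x)) (at x)" if x: "x \<in> {s1..s}" for x
  proof -
    have x1: "x < 1" using x s1' by auto
    have "((\<lambda>u. g u + k * ln (1 - u)) has_real_derivative g' x + k * (inverse (1 - x) * (0 - 1))) (at x)"
      using d x x1 by (intro derivative_eq_intros refl) (auto simp: divide_inverse)
    then show ?thesis
      unfolding h_def[abs_def] by (simp add: field_simps)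
  qed
  have nn: "0 \<le> g' x - k / (1 - x)" if x: "x \<in> {s1..s}" for x
    using d x s1' by auto
  have "h s1 \<le> h s" by (rule deriv_nonneg_imp_mono[OF der nn ss1])
  moreover have "ln (1 - s) = ln (1 - s1) - \<bar>K\<bar> / k"
    unfolding s_def using s1 by (simp add: ln_mult)
  ultimately have "g s1 + k * ln (1 - s1) \<le> g s + k * (ln (1 - s1) - \<bar>K\<bar> / k)"
    unfolding h_def by simp
  moreover have "k * (ln (1 - s1) - \<bar>K\<bar> / k) = k * ln (1 - s1) - \<bar>K\<bar>"
    using k by (simp add: field_simps)
  ultimately have "g s \<ge> g s1 + \<bar>K\<bar>" by linarith
  then show ?thesis using ss1 s1' by (intro exI[of _ s]) auto
qed

lemma blowup_left:
  fixes g g' :: "real \<Rightarrow> real"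
  assumes s1: "s1 > -1" and k: "k > 0"
    and d: "\<forall>u\<in>{-1<..s1}. (g has_real_derivative g' u) (at u) \<and> g' u \<ge> k / (1 + u)"
  shows "\<exists>s. -1 < s \<and> s \<le> s1 \<and> g s \<le> g s1 - K"
proof -
  define s where "s = -1 + (1 + s1) * exp (- \<bar>K\<bar> / k)"
  have ex: "exp (- \<bar>K\<bar> / k) \<le> 1" "exp (- \<bar>K\<bar> / k) > 0" using k by auto
  have "(1 + s1) * exp (- \<bar>K\<bar> / k) \<le> (1 + s1)"
    by (rule mult_left_le) (use ex s1 in auto)
  then have ss1: "s \<le> s1" unfolding s_def by linarith
  have s1': "s > -1" using ex s1 unfolding s_def by simp
  define h where "h u = g u - k * ln (1 + u)" for u
  have der: "(h has_real_derivative g' x - k / (1 + x)) (at x)" if x: "x \<in> {s..s1}" for x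
  proof -
    have x1: "x > -1" using x s1' by auto
    have "((\<lambda>u. g u - k * ln (1 + u)) has_real_derivative g' x - k * (inverse (1 + x) * (0 + 1))) (at x)"
      using d x x1 by (intro derivative_eq_intros refl) (auto simp: divide_inverse)
    then show ?thesis
      unfolding h_def[abs_def] by (simp add: field_simps)
  qed
  have nn: "0 \<le> g' x - k / (1 + x)" if x: "x \<in> {s..s1}" for x
    using d x s1' by auto
  have "h s \<le> h s1" by (rule deriv_nonneg_imp_mono[OF der nn ss1])
  moreover have "ln (1 + s) = ln (1 + s1) - \<bar>K\<bar> / k"
    unfolding s_def using s1 by (simp add: ln_mult)
  ultimately have "g s - k * (ln (1 + s1) - \<bar>K\<bar> / k) \<le> g s1 - k * ln (1 + s1)"
    unfolding h_def by simp
  moreover have "k * (ln (1 + s1) - \<bar>K\<bar> / k) = k * ln (1 + s1) - \<bar>K\<bar>"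
    using k by (simp add: field_simps)
  ultimately have "g s \<le> g s1 - \<bar>K\<bar>" by linarith
  then show ?thesis using ss1 s1' by (intro exI[of _ s]) auto
qed

lemma frac_bound:
  fixes a D x \<epsilon> :: real
  assumes "0 < a" "a \<le> D" "\<epsilon> \<le> x" "0 < \<epsilon>"
  shows "\<epsilon> / D \<le> x / a"
proof -
  have "\<epsilon> / D \<le> \<epsilon> / a" by (rule divide_left_mono) (use assms in auto)
  also have "\<dots> \<le> x / a" by (rule divide_right_mono) (use assms in auto)
  finally show ?thesis .
qed

locale bp =
  fixes c \<alpha> p M I :: real and \<phi> \<phi>' :: "real \<Rightarrow> real"
  assumes p_gt: "p > 1"
    and alpha_gt: "\<alpha> > c\<^sup>2 / 4"
    and Mb: "\<forall>t\<in>{-1..1}. \<bar>\<phi> t\<bar> \<le> M"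
    and deriv1: "\<forall>\<eta>\<in>{-1<..<1}. (\<phi> has_real_derivative \<phi>' \<eta>) (at \<eta>)"
    and ode: "\<forall>\<eta>\<in>{-1<..<1}.
      ((\<lambda>t. (1 - t) * (1 + t) powr p * \<phi>' t) has_real_derivative
         (- ((\<alpha> - c\<^sup>2 * (1 + \<eta>) / 8) * (1 + \<eta>) powr (p - 1) * \<phi> \<eta>))) (at \<eta>)"
    and intg: "((\<lambda>t. (1 + t) powr (p - 1) * \<bar>\<phi> t\<bar>\<^sup>2) has_integral I) {-1..1}"
begin

definition "A t = (1 - t) * (1 + t) powr p"
definition "e t = (1 + t) powr (p - 1)"
definition "bt t = \<alpha> - c\<^sup>2 * (1 + t) / 8"
definition "P t = (1 - t) * (1 + t) powr p * \<phi>' t"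
definition "Y t = integral {-1..t} (\<lambda>u. (1 + u) powr (p - 1) * \<bar>\<phi> u\<bar>\<^sup>2)"

lemma e_pos: "t > -1 \<Longrightarrow> e t > 0"
  unfolding e_def by simp

lemma powr_p: "t > -1 \<Longrightarrow> (1 + t) powr p = (1 + t) * e t"
proof -
  assume "t > -1"
  have "(1 + t) powr p = (1 + t) powr (1 + (p - 1))" by simp
  also have "\<dots> = (1 + t) powr 1 * (1 + t) powr (p - 1)" by (rule powr_add)
  also have "\<dots> = (1 + t) * e t" using \<open>t > -1\<close> by (simp add: e_def)
  finally show ?thesis .
qed

lemma powr_pm2: "t > -1 \<Longrightarrow> (1 + t) powr (p - 2) * (1 + t) = e t"
proof -
  assume "t > -1"
  have "e t = (1 + t) powr ((p - 2) + 1)" by (simp add: e_def)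
  also have "\<dots> = (1 + t) powr (p - 2) * (1 + t) powr 1" by (rule powr_add)
  also have "\<dots> = (1 + t) powr (p - 2) * (1 + t)" using \<open>t > -1\<close> by simp
  finally show ?thesis by simp
qed

lemma e_le: "-1 < t \<Longrightarrow> t \<le> 1 \<Longrightarrow> e t \<le> 2 powr (p - 1)"
  unfolding e_def using p_gt by (intro powr_mono2) auto

lemma e_ge1: "0 \<le> t \<Longrightarrow> e t \<ge> 1"
  unfolding e_def using p_gt by (simp add: ge_one_powr_ge_zero)

lemma bt_pos: "t \<le> 1 \<Longrightarrow> bt t \<ge> \<alpha> - c\<^sup>2 / 4"
proof -
  assume "t \<le> 1"
  then have "(1 + t) * c\<^sup>2 \<le> 2 * c\<^sup>2" by (intro mult_right_mono) auto
  then show ?thesis unfolding bt_def by (simp add: divide_simps)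
qed

lemma gam_pos: "\<alpha> - c\<^sup>2 / 4 > 0" using alpha_gt by simp

lemma bt_pos': "t \<le> 1 \<Longrightarrow> bt t > 0" using bt_pos gam_pos by fastforce

lemma bt_le: "-1 \<le> t \<Longrightarrow> bt t \<le> \<alpha>"
  unfolding bt_def by simp

lemma dphi: "-1 < t \<Longrightarrow> t < 1 \<Longrightarrow> (\<phi> has_real_derivative \<phi>' t) (at t)"
  using deriv1 by auto

lemma cont_phi: "-1 < t \<Longrightarrow> t < 1 \<Longrightarrow> isCont \<phi> t"
  using dphi DERIV_isCont by blast

lemma dP: "-1 < t \<Longrightarrow> t < 1 \<Longrightarrow> (P has_real_derivative (-(bt t * e t * \<phi> t))) (at t)"
proof -
  assume "-1 < t" "t < 1"
  then have "((\<lambda>t. (1 - t) * (1 + t) powr p * \<phi>' t) has_real_derivative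
         (- ((\<alpha> - c\<^sup>2 * (1 + t) / 8) * (1 + t) powr (p - 1) * \<phi> t))) (at t)"
    using ode by auto
  moreover have "P = (\<lambda>t. (1 - t) * (1 + t) powr p * \<phi>' t)" by (rule ext) (simp add: P_def)
  ultimately show ?thesis by (simp add: bt_def e_def)
qed

lemma cont_P: "-1 < t \<Longrightarrow> t < 1 \<Longrightarrow> isCont P t"
  using dP DERIV_isCont by blast

lemma A_pos: "-1 < t \<Longrightarrow> t < 1 \<Longrightarrow> A t > 0"
  unfolding A_def by simp

lemma dA: "-1 < t \<Longrightarrow> (A has_real_derivative e t * (p - 1 - (p + 1) * t)) (at t)"
proof -
  assume t: "-1 < t"
  have "((\<lambda>t. (1 - t) * (1 + t) powr p) has_real_derivative
      (- 1) * (1 + t) powr p + (1 - t) * (p * (1 + t) powr (p - 1) * (0 + 1))) (at t)"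
    using t by (intro derivative_eq_intros refl) auto
  moreover have "A = (\<lambda>t. (1 - t) * (1 + t) powr p)" by (rule ext) (simp add: A_def)
  moreover have "(- 1) * (1 + t) powr p + (1 - t) * (p * (1 + t) powr (p - 1) * (0 + 1))
     = e t * (p - 1 - (p + 1) * t)"
    using t by (simp add: powr_p e_def algebra_simps)
  ultimately show ?thesis by simp
qed

lemma de: "-1 < t \<Longrightarrow> (e has_real_derivative (p - 1) * e t / (1 + t)) (at t)"
proof -
  assume t: "-1 < t"
  have "((\<lambda>t. (1 + t) powr (p - 1)) has_real_derivative
      (p - 1) * (1 + t) powr (p - 1 - 1) * (0 + 1)) (at t)"
    using t by (intro derivative_eq_intros refl) auto
  moreover have "e = (\<lambda>t. (1 + t) powr (p - 1))" by (rule ext) (simp add: e_def)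
  moreover have "(p - 1) * (1 + t) powr (p - 1 - 1) * (0 + 1) = (p - 1) * e t / (1 + t)"
    using t powr_pm2[OF t] by (simp add: field_simps)
  ultimately show ?thesis by simp
qed

lemma dbt: "(bt has_real_derivative - (c\<^sup>2 / 8)) (at t)"
proof -
  have "((\<lambda>t. \<alpha> - c\<^sup>2 * (1 + t) / 8) has_real_derivative - (c\<^sup>2 / 8)) (at t)"
    by (auto intro!: derivative_eq_intros)
  moreover have "bt = (\<lambda>t. \<alpha> - c\<^sup>2 * (1 + t) / 8)" by (rule ext) (simp add: bt_def)
  ultimately show ?thesis by simp
qed

definition "fw u = (1 + u) powr (p - 1) * \<bar>\<phi> u\<bar>\<^sup>2"

lemma fw_int: "fw integrable_on {-1..1}"
  using intg unfolding fw_def[abs_def] by blast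

lemma I_eq: "integral {-1..1} fw = I"
  using intg unfolding fw_def[abs_def] by blast

lemma fw_nonneg: "0 \<le> fw u" unfolding fw_def by simp

lemma Y_fw: "Y t = integral {-1..t} fw"
  unfolding Y_def fw_def[abs_def] ..

lemma Y_nonneg: "-1 \<le> t \<Longrightarrow> t \<le> 1 \<Longrightarrow> 0 \<le> Y t"
  unfolding Y_fw
  by (intro integral_nonneg integrable_subinterval_real[OF fw_int] fw_nonneg) auto

lemma Y_le: "-1 \<le> t \<Longrightarrow> t \<le> 1 \<Longrightarrow> Y t \<le> I"
  unfolding Y_fw I_eq[symmetric]
  by (intro integral_subset_le integrable_subinterval_real[OF fw_int] fw_int ballI fw_nonneg) auto

lemma cont_fw: "-1 < t \<Longrightarrow> t < 1 \<Longrightarrow> isCont fw t"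
proof -
  assume t: "-1 < t" "t < 1"
  have "isCont (\<lambda>u. (1 + u) powr (p - 1) * \<bar>\<phi> u\<bar>\<^sup>2) t"
    using t cont_phi[OF t] by (intro continuous_intros) auto
  then show ?thesis unfolding fw_def[abs_def] .
qed

lemma dY: "-1 < t \<Longrightarrow> t < 1 \<Longrightarrow> (Y has_real_derivative fw t) (at t)"
proof -
  assume t: "-1 < t" "t < 1"
  have "((\<lambda>u. integral {-1..u} fw) has_vector_derivative fw t) (at t within ({-1..1} - {}))"
    by (rule integral_has_vector_derivative_continuous_at[OF fw_int])
       (use t cont_fw[OF t] in \<open>auto intro: continuous_at_imp_continuous_within\<close>)
  moreover have "at t within ({-1..1} - {}) = at t"
    using t by (intro at_within_interior) auto
  ultimately show ?thesis
    by (simp add: has_real_derivative_iff_has_vector_derivative Y_fw[abs_def])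
qed

lemma P_A: "P t = A t * \<phi>' t" unfolding P_def A_def by simp

lemma phi'_eq: "-1 < u \<Longrightarrow> u < 1 \<Longrightarrow> \<phi>' u = P u / A u"
  using A_pos[of u] by (simp add: P_A)

lemma A_le_right: "0 \<le> u \<Longrightarrow> u < 1 \<Longrightarrow> A u \<le> (1 - u) * 2 powr p"
  unfolding A_def using p_gt by (intro mult_left_mono powr_mono2) auto

lemma A_le_left: "-1 < u \<Longrightarrow> u \<le> 0 \<Longrightarrow> A u \<le> 2 * (1 + u)"
proof -
  assume u: "-1 < u" "u \<le> 0"
  have "(1 + u) powr p \<le> (1 + u) powr 1"
    using u p_gt by (intro powr_mono') auto
  then have "(1 + u) powr p \<le> 1 + u" using u by simp
  moreover have "0 \<le> (1 + u) powr p" by simp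
  ultimately have "(1 - u) * (1 + u) powr p \<le> 2 * (1 + u)"
    using u by (intro mult_mono) auto
  then show ?thesis unfolding A_def .
qed

lemma M_nonneg: "0 \<le> M" using Mb by force

lemma small_P_right:
  assumes t0: "0 \<le> t0" "t0 < 1" and ep: "\<epsilon> > 0"
  shows "\<exists>s. t0 < s \<and> s < 1 \<and> \<bar>P s\<bar> < \<epsilon>"
proof (rule ccontr)
  assume "\<not> ?thesis"
  then have big: "\<forall>u\<in>{t0<..<1}. \<bar>P u\<bar> \<ge> \<epsilon>" by force
  have cont: "\<forall>u\<in>{t0<..<1}. isCont P u" using t0 cont_P by auto
  define s1 where "s1 = (t0 + 1) / 2"
  have s1: "t0 < s1" "s1 < 1" using t0 unfolding s1_def by auto
  define k where "k = \<epsilon> / 2 powr p"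
  have k: "k > 0" using ep unfolding k_def by simp
  have kb: "k / (1 - u) \<le> x / A u" if "s1 \<le> u" "u < 1" "\<epsilon> \<le> x" for u x
  proof -
    have "k / (1 - u) = \<epsilon> / ((1 - u) * 2 powr p)" unfolding k_def by (simp add: field_simps)
    also have "\<dots> \<le> x / A u"
      using that s1 t0 ep A_pos[of u] A_le_right[of u] by (intro frac_bound) auto
    finally show ?thesis .
  qed
  have Ms: "\<bar>\<phi> u\<bar> \<le> M" if "-1 \<le> u" "u \<le> 1" for u using Mb that by auto
  from sign_const[OF cont big ep] show False
  proof
    assume pos: "\<forall>u\<in>{t0<..<1}. \<epsilon> \<le> P u"
    have "\<exists>s. s1 \<le> s \<and> s < 1 \<and> \<phi> s \<ge> \<phi> s1 + (2 * M + 1)"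
    proof (rule blowup_right[OF s1(2) k])
      show "\<forall>u\<in>{s1..<1}. (\<phi> has_real_derivative \<phi>' u) (at u) \<and> k / (1 - u) \<le> \<phi>' u"
      proof
        fix u assume u: "u \<in> {s1..<1}"
        then have u': "-1 < u" "u < 1" "t0 < u" using s1 t0 by auto
        show "(\<phi> has_real_derivative \<phi>' u) (at u) \<and> k / (1 - u) \<le> \<phi>' u"
          using dphi[OF u'(1,2)] kb[of u "P u"] pos u u' phi'_eq[OF u'(1,2)] by auto
      qed
    qed
    then obtain s where "s1 \<le> s" "s < 1" "\<phi> s \<ge> \<phi> s1 + (2 * M + 1)" by blast
    moreover have "\<bar>\<phi> s\<bar> \<le> M" "\<bar>\<phi> s1\<bar> \<le> M" using Ms s1 t0 \<open>s1 \<le> s\<close> \<open>s < 1\<close> by auto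
    ultimately show False by linarith
  next
    assume neg: "\<forall>u\<in>{t0<..<1}. P u \<le> -\<epsilon>"
    have "\<exists>s. s1 \<le> s \<and> s < 1 \<and> - \<phi> s \<ge> - \<phi> s1 + (2 * M + 1)"
    proof (rule blowup_right[OF s1(2) k, where g="\<lambda>u. - \<phi> u" and g'="\<lambda>u. - \<phi>' u"])
      show "\<forall>u\<in>{s1..<1}. ((\<lambda>u. - \<phi> u) has_real_derivative - \<phi>' u) (at u) \<and> k / (1 - u) \<le> - \<phi>' u"
      proof
        fix u assume u: "u \<in> {s1..<1}"
        then have u': "-1 < u" "u < 1" "t0 < u" using s1 t0 by auto
        have "P u \<le> -\<epsilon>" using neg u' by auto
        then have "k / (1 - u) \<le> (- P u) / A u" using kb[of u "- P u"] u u' by auto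
        then have "k / (1 - u) \<le> - \<phi>' u" using phi'_eq[OF u'(1,2)] by simp
        then show "((\<lambda>u. - \<phi> u) has_real_derivative - \<phi>' u) (at u) \<and> k / (1 - u) \<le> - \<phi>' u"
          using DERIV_minus[OF dphi[OF u'(1,2)]] by auto
      qed
    qed
    then obtain s where "s1 \<le> s" "s < 1" "- \<phi> s \<ge> - \<phi> s1 + (2 * M + 1)" by blast
    moreover have "\<bar>\<phi> s\<bar> \<le> M" "\<bar>\<phi> s1\<bar> \<le> M" using Ms s1 t0 \<open>s1 \<le> s\<close> \<open>s < 1\<close> by auto
    ultimately show False by linarith
  qed
qed


lemma small_P_left:
  assumes t0: "-1 < t0" "t0 \<le> 0" and ep: "\<epsilon> > 0"
  shows "\<exists>s. -1 < s \<and> s < t0 \<and> \<bar>P s\<bar> < \<epsilon>"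
proof (rule ccontr)
  assume "\<not> ?thesis"
  then have big: "\<forall>u\<in>{-1<..<t0}. \<bar>P u\<bar> \<ge> \<epsilon>" by force
  have cont: "\<forall>u\<in>{-1<..<t0}. isCont P u" using t0 cont_P by auto
  define s1 where "s1 = (t0 - 1) / 2"
  have s1: "s1 < t0" "-1 < s1" using t0 unfolding s1_def by auto
  define k where "k = \<epsilon> / 2"
  have k: "k > 0" using ep unfolding k_def by simp
  have kb: "k / (1 + u) \<le> x / A u" if "u \<le> s1" "-1 < u" "\<epsilon> \<le> x" for u x
  proof -
    have "k / (1 + u) = \<epsilon> / (2 * (1 + u))" unfolding k_def by (simp add: field_simps)
    also have "\<dots> \<le> x / A u"
      using that s1 t0 ep A_pos[of u] A_le_left[of u] by (intro frac_bound) auto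
    finally show ?thesis .
  qed
  have Ms: "\<bar>\<phi> u\<bar> \<le> M" if "-1 \<le> u" "u \<le> 1" for u using Mb that by auto
  from sign_const[OF cont big ep] show False
  proof
    assume pos: "\<forall>u\<in>{-1<..<t0}. \<epsilon> \<le> P u"
    have "\<exists>s. -1 < s \<and> s \<le> s1 \<and> \<phi> s \<le> \<phi> s1 - (2 * M + 1)"
    proof (rule blowup_left[OF s1(2) k])
      show "\<forall>u\<in>{-1<..s1}. (\<phi> has_real_derivative \<phi>' u) (at u) \<and> k / (1 + u) \<le> \<phi>' u"
      proof
        fix u assume u: "u \<in> {-1<..s1}"
        then have u': "-1 < u" "u < 1" "u < t0" using s1 t0 by auto
        show "(\<phi> has_real_derivative \<phi>' u) (at u) \<and> k / (1 + u) \<le> \<phi>' u"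
          using dphi[OF u'(1,2)] kb[of u "P u"] pos u u' phi'_eq[OF u'(1,2)] by auto
      qed
    qed
    then obtain s where "-1 < s" "s \<le> s1" "\<phi> s \<le> \<phi> s1 - (2 * M + 1)" by blast
    moreover have "\<bar>\<phi> s\<bar> \<le> M" "\<bar>\<phi> s1\<bar> \<le> M" using Ms s1 t0 \<open>-1 < s\<close> \<open>s \<le> s1\<close> by auto
    ultimately show False by linarith
  next
    assume neg: "\<forall>u\<in>{-1<..<t0}. P u \<le> -\<epsilon>"
    have "\<exists>s. -1 < s \<and> s \<le> s1 \<and> - \<phi> s \<le> - \<phi> s1 - (2 * M + 1)"
    proof (rule blowup_left[OF s1(2) k, where g="\<lambda>u. - \<phi> u" and g'="\<lambda>u. - \<phi>' u"])
      show "\<forall>u\<in>{-1<..s1}. ((\<lambda>u. - \<phi> u) has_real_derivative - \<phi>' u) (at u) \<and> k / (1 + u) \<le> - \<phi>' u"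
      proof
        fix u assume u: "u \<in> {-1<..s1}"
        then have u': "-1 < u" "u < 1" "u < t0" using s1 t0 by auto
        have "P u \<le> -\<epsilon>" using neg u' by auto
        then have "k / (1 + u) \<le> (- P u) / A u" using kb[of u "- P u"] u u' by auto
        then have "k / (1 + u) \<le> - \<phi>' u" using phi'_eq[OF u'(1,2)] by simp
        then show "((\<lambda>u. - \<phi> u) has_real_derivative - \<phi>' u) (at u) \<and> k / (1 + u) \<le> - \<phi>' u"
          using DERIV_minus[OF dphi[OF u'(1,2)]] by auto
      qed
    qed
    then obtain s where "-1 < s" "s \<le> s1" "- \<phi> s \<le> - \<phi> s1 - (2 * M + 1)" by blast
    moreover have "\<bar>\<phi> s\<bar> \<le> M" "\<bar>\<phi> s1\<bar> \<le> M" using Ms s1 t0 \<open>-1 < s\<close> \<open>s \<le> s1\<close> by auto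
    ultimately show False by linarith
  qed
qed


lemma alpha_pos: "\<alpha> > 0"
proof -
  have "c\<^sup>2 / 4 \<ge> 0" by simp
  then show ?thesis using alpha_gt by linarith
qed

lemma dP_bound: "-1 < u \<Longrightarrow> u < 1 \<Longrightarrow> \<bar>bt u * e u * \<phi> u\<bar> \<le> \<alpha> * M * e u"
proof -
  assume u: "-1 < u" "u < 1"
  have "\<bar>bt u * e u * \<phi> u\<bar> = bt u * e u * \<bar>\<phi> u\<bar>"
    using bt_pos'[of u] e_pos[of u] u by (simp add: abs_mult)
  also have "\<dots> \<le> \<alpha> * e u * M"
    using bt_pos'[of u] e_pos[of u] u bt_le[of u] Mb
    by (intro mult_mono) auto
  finally show ?thesis by (simp add: algebra_simps)
qed

lemma P_bound_right: "\<exists>C\<ge>0. \<forall>t. 0 \<le> t \<longrightarrow> t < 1 \<longrightarrow> \<bar>P t\<bar> \<le> C * (1 - t)"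
proof -
  define C where "C = \<alpha> * M * 2 powr (p - 1)"
  have C0: "C \<ge> 0" unfolding C_def using alpha_pos M_nonneg by simp
  have Pd: "\<bar>bt u * e u * \<phi> u\<bar> \<le> C" if "0 \<le> u" "u < 1" for u
  proof -
    have "\<bar>bt u * e u * \<phi> u\<bar> \<le> \<alpha> * M * e u" using dP_bound that by auto
    also have "\<dots> \<le> C" unfolding C_def using e_le[of u] that alpha_pos M_nonneg
      by (intro mult_left_mono mult_nonneg_nonneg) auto
    finally show ?thesis .
  qed
  have diff: "\<bar>P t\<bar> \<le> \<bar>P s\<bar> + C * (1 - t)" if ts: "0 \<le> t" "t \<le> s" "s < 1" for t s
  proof -
    have "C * t + P t \<le> C * s + P s"
    proof (rule deriv_nonneg_imp_mono[OF _ _ ts(2)])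
      fix x assume x: "x \<in> {t..s}"
      then have x': "-1 < x" "x < 1" "0 \<le> x" using ts by auto
      show "((\<lambda>x. C * x + P x) has_real_derivative C * 1 + (- (bt x * e x * \<phi> x))) (at x)"
        using dP[OF x'(1,2)] by (intro derivative_eq_intros refl) auto
      show "0 \<le> C * 1 + (- (bt x * e x * \<phi> x))" using Pd[of x] x' by auto
    qed
    moreover have "C * t - P t \<le> C * s - P s"
    proof (rule deriv_nonneg_imp_mono[OF _ _ ts(2)])
      fix x assume x: "x \<in> {t..s}"
      then have x': "-1 < x" "x < 1" "0 \<le> x" using ts by auto
      show "((\<lambda>x. C * x - P x) has_real_derivative C * 1 - (- (bt x * e x * \<phi> x))) (at x)"
        using dP[OF x'(1,2)] by (intro derivative_eq_intros refl) auto
      show "0 \<le> C * 1 - (- (bt x * e x * \<phi> x))" using Pd[of x] x' by auto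
    qed
    moreover have "C * (s - t) \<le> C * (1 - t)" using C0 ts by (intro mult_left_mono) auto
    ultimately show ?thesis by (simp add: algebra_simps abs_le_iff)
  qed
  have "\<bar>P t\<bar> \<le> C * (1 - t)" if t: "0 \<le> t" "t < 1" for t
  proof (rule field_le_epsilon)
    fix \<epsilon> :: real assume ep: "0 < \<epsilon>"
    obtain s where s: "t < s" "s < 1" "\<bar>P s\<bar> < \<epsilon>" using small_P_right[OF t ep] by blast
    show "\<bar>P t\<bar> \<le> C * (1 - t) + \<epsilon>" using diff[of t s] s t by auto
  qed
  then show ?thesis using C0 by blast
qed

lemma dpowp: "-1 < u \<Longrightarrow> ((\<lambda>u. (1 + u) powr p) has_real_derivative p * e u) (at u)"
proof -
  assume u: "-1 < u"
  have "((\<lambda>u. (1 + u) powr p) has_real_derivative p * (1 + u) powr (p - 1) * (0 + 1)) (at u)"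
    using u by (intro derivative_eq_intros refl) auto
  then show ?thesis by (simp add: e_def)
qed

lemma P_bound_left: "\<exists>C\<ge>0. \<forall>t. -1 < t \<longrightarrow> t \<le> 0 \<longrightarrow> \<bar>P t\<bar> \<le> C * (1 + t) powr p"
proof -
  define C where "C = \<alpha> * M / p"
  have aM: "\<alpha> * M \<ge> 0" using alpha_pos M_nonneg by simp
  have C0: "C \<ge> 0" unfolding C_def using aM p_gt by simp
  have Cp: "C * p = \<alpha> * M" unfolding C_def using p_gt by simp
  have diff: "\<bar>P t\<bar> \<le> \<bar>P s\<bar> + C * (1 + t) powr p" if ts: "-1 < s" "s \<le> t" "t \<le> 0" for t s
  proof -
    have "C * (1 + s) powr p + P s \<le> C * (1 + t) powr p + P t"
    proof (rule deriv_nonneg_imp_mono[OF _ _ ts(2)])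
      fix x assume x: "x \<in> {s..t}"
      then have x': "-1 < x" "x < 1" using ts by auto
      show "((\<lambda>x. C * (1 + x) powr p + P x) has_real_derivative C * (p * e x) + (- (bt x * e x * \<phi> x))) (at x)"
        by (rule DERIV_add[OF DERIV_cmult[OF dpowp[OF x'(1)]] dP[OF x'(1,2)]])
      have eqC: "C * (p * e x) = \<alpha> * M * e x" using Cp by (metis mult.assoc)
      have "\<bar>bt x * e x * \<phi> x\<bar> \<le> \<alpha> * M * e x" by (rule dP_bound[OF x'])
      then show "0 \<le> C * (p * e x) + (- (bt x * e x * \<phi> x))" unfolding eqC abs_le_iff by linarith
    qed
    moreover have "C * (1 + s) powr p - P s \<le> C * (1 + t) powr p - P t"
    proof (rule deriv_nonneg_imp_mono[OF _ _ ts(2)])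
      fix x assume x: "x \<in> {s..t}"
      then have x': "-1 < x" "x < 1" using ts by auto
      show "((\<lambda>x. C * (1 + x) powr p - P x) has_real_derivative C * (p * e x) - (- (bt x * e x * \<phi> x))) (at x)"
        by (rule DERIV_diff[OF DERIV_cmult[OF dpowp[OF x'(1)]] dP[OF x'(1,2)]])
      have eqC: "C * (p * e x) = \<alpha> * M * e x" using Cp by (metis mult.assoc)
      have "\<bar>bt x * e x * \<phi> x\<bar> \<le> \<alpha> * M * e x" by (rule dP_bound[OF x'])
      then show "0 \<le> C * (p * e x) - (- (bt x * e x * \<phi> x))" unfolding eqC abs_le_iff by linarith
    qed
    moreover have "0 \<le> C * (1 + s) powr p" using C0 by simp
    ultimately show ?thesis unfolding abs_le_iff
      using abs_ge_self[of "P s"] abs_ge_minus_self[of "P s"] by linarith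
  qed
  have "\<bar>P t\<bar> \<le> C * (1 + t) powr p" if t: "-1 < t" "t \<le> 0" for t
  proof (rule field_le_epsilon)
    fix \<epsilon> :: real assume ep: "0 < \<epsilon>"
    obtain s where s: "-1 < s" "s < t" "\<bar>P s\<bar> < \<epsilon>" using small_P_left[OF t ep] by blast
    show "\<bar>P t\<bar> \<le> C * (1 + t) powr p + \<epsilon>" using diff[of s t] s t by auto
  qed
  then show ?thesis using C0 by blast
qed


definition "G t = A t * (\<phi> t)\<^sup>2 + inverse (bt t * e t) * (P t)\<^sup>2"
definition "F0 t = A t * e t * (\<phi> t)\<^sup>2 + inverse (bt t) * (P t)\<^sup>2"
definition "B1 t = - (c\<^sup>2 / 8) * e t + ((p - 1) * e t / (1 + t)) * bt t"

lemma dG: "-1 < t \<Longrightarrow> t < 1 \<Longrightarrow>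
  (G has_real_derivative e t * (p - 1 - (p + 1) * t) * (\<phi> t)\<^sup>2
     + (- (B1 t * inverse ((bt t * e t) ^ Suc (Suc 0)))) * (P t)\<^sup>2) (at t)"
proof -
  assume t: "-1 < t" "t < 1"
  have dS: "((\<lambda>u. inverse (bt u * e u)) has_real_derivative
      - (B1 t * inverse ((bt t * e t) ^ Suc (Suc 0)))) (at t)"
    unfolding B1_def
    by (rule DERIV_inverse_fun[OF DERIV_mult[OF dbt de[OF t(1)]]])
       (use bt_pos'[of t] e_pos[of t] t in auto)
  have "((\<lambda>u. A u * (\<phi> u)\<^sup>2 + inverse (bt u * e u) * (P u)\<^sup>2) has_real_derivative
      e t * (p - 1 - (p + 1) * t) * (\<phi> t)\<^sup>2
     + (- (B1 t * inverse ((bt t * e t) ^ Suc (Suc 0)))) * (P t)\<^sup>2) (at t)"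
    by (rule energy_deriv[OF dphi[OF t] dP[OF t] P_A dA[OF t(1)] dS])
       (use bt_pos'[of t] e_pos[of t] t in \<open>auto simp: field_simps\<close>)
  then show ?thesis unfolding G_def[abs_def] .
qed

lemma dF0: "-1 < t \<Longrightarrow> t < 1 \<Longrightarrow>
  (F0 has_real_derivative (e t * (p - 1 - (p + 1) * t) * e t + ((p - 1) * e t / (1 + t)) * A t) * (\<phi> t)\<^sup>2
     + (- (- (c\<^sup>2 / 8) * inverse (bt t ^ Suc (Suc 0)))) * (P t)\<^sup>2) (at t)"
proof -
  assume t: "-1 < t" "t < 1"
  have dS: "((\<lambda>u. inverse (bt u)) has_real_derivative
      - (- (c\<^sup>2 / 8) * inverse (bt t ^ Suc (Suc 0)))) (at t)"
    by (rule DERIV_inverse_fun[OF dbt]) (use bt_pos'[of t] t in auto)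
  have dR: "((\<lambda>u. A u * e u) has_real_derivative
      e t * (p - 1 - (p + 1) * t) * e t + ((p - 1) * e t / (1 + t)) * A t) (at t)"
    by (rule DERIV_mult[OF dA[OF t(1)] de[OF t(1)]])
  have "((\<lambda>u. A u * e u * (\<phi> u)\<^sup>2 + inverse (bt u) * (P u)\<^sup>2) has_real_derivative
      (e t * (p - 1 - (p + 1) * t) * e t + ((p - 1) * e t / (1 + t)) * A t) * (\<phi> t)\<^sup>2
     + (- (- (c\<^sup>2 / 8) * inverse (bt t ^ Suc (Suc 0)))) * (P t)\<^sup>2) (at t)"
    by (rule energy_deriv[OF dphi[OF t] dP[OF t] P_A dR dS])
       (use bt_pos'[of t] e_pos[of t] t in \<open>auto simp: field_simps\<close>)
  then show ?thesis unfolding F0_def[abs_def] .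
qed

end




lemma lim_right:
  fixes x y K t0 :: real
  assumes "t0 < 1" and "\<And>t. t0 \<le> t \<Longrightarrow> t < 1 \<Longrightarrow> x \<le> K * (1 - t) + y"
  shows "x \<le> y"
proof (rule field_le_epsilon)
  fix \<epsilon> :: real assume ep: "0 < \<epsilon>"
  define t where "t = max t0 (1 - \<epsilon> / (\<bar>K\<bar> + 1))"
  have t1: "t < 1" using assms(1) ep unfolding t_def by auto
  have t0: "t0 \<le> t" unfolding t_def by auto
  have d: "1 - t \<le> \<epsilon> / (\<bar>K\<bar> + 1)" "0 \<le> 1 - t" using t1 unfolding t_def by auto
  have "K * (1 - t) \<le> \<bar>K\<bar> * (1 - t)" using d(2) by (intro mult_right_mono) auto
  also have "\<dots> \<le> \<bar>K\<bar> * (\<epsilon> / (\<bar>K\<bar> + 1))" using d by (intro mult_left_mono) auto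
  also have "\<dots> \<le> \<epsilon>" using ep by (simp add: field_simps)
  finally show "x \<le> y + \<epsilon>" using assms(2)[OF t0 t1] by linarith
qed

lemma lim_left:
  fixes x y K t0 :: real
  assumes "-1 < t0" and "\<And>t. -1 < t \<Longrightarrow> t \<le> t0 \<Longrightarrow> x \<le> K * (1 + t) + y"
  shows "x \<le> y"
proof (rule field_le_epsilon)
  fix \<epsilon> :: real assume ep: "0 < \<epsilon>"
  define t where "t = min t0 (-1 + \<epsilon> / (\<bar>K\<bar> + 1))"
  have t1: "-1 < t" using assms(1) ep unfolding t_def by auto
  have t0: "t \<le> t0" unfolding t_def by auto
  have d: "1 + t \<le> \<epsilon> / (\<bar>K\<bar> + 1)" "0 \<le> 1 + t" using t1 unfolding t_def by auto
  have "K * (1 + t) \<le> \<bar>K\<bar> * (1 + t)" using d(2) by (intro mult_right_mono) auto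
  also have "\<dots> \<le> \<bar>K\<bar> * (\<epsilon> / (\<bar>K\<bar> + 1))" using d by (intro mult_left_mono) auto
  also have "\<dots> \<le> \<epsilon>" using ep by (simp add: field_simps)
  finally show "x \<le> y + \<epsilon>" using assms(2)[OF t1 t0] by linarith
qed

context bp begin

lemma phi_sq: "-1 \<le> t \<Longrightarrow> t \<le> 1 \<Longrightarrow> (\<phi> t)\<^sup>2 \<le> M\<^sup>2"
proof -
  assume t: "-1 \<le> t" "t \<le> 1"
  have a: "\<bar>\<phi> t\<bar> \<le> M" using Mb t by auto
  have "\<bar>\<phi> t\<bar>\<^sup>2 \<le> M\<^sup>2" by (rule power_mono[OF a]) simp
  then show ?thesis by simp
qed


lemma Aphi_right: "0 \<le> t \<Longrightarrow> t < 1 \<Longrightarrow> A t * (\<phi> t)\<^sup>2 \<le> 2 powr p * M\<^sup>2 * (1 - t)"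
proof -
  assume t: "0 \<le> t" "t < 1"
  have "A t * (\<phi> t)\<^sup>2 \<le> ((1 - t) * 2 powr p) * M\<^sup>2"
    using A_le_right[OF t] phi_sq[of t] A_pos[of t] t by (intro mult_mono) auto
  then show ?thesis by (simp add: algebra_simps)
qed

lemma Aphi_left: "-1 < t \<Longrightarrow> t \<le> 0 \<Longrightarrow> A t * (\<phi> t)\<^sup>2 \<le> 2 * M\<^sup>2 * (1 + t)"
proof -
  assume t: "-1 < t" "t \<le> 0"
  have "A t * (\<phi> t)\<^sup>2 \<le> (2 * (1 + t)) * M\<^sup>2"
    using A_le_left[OF t] phi_sq[of t] A_pos[of t] t by (intro mult_mono) auto
  then show ?thesis by (simp add: algebra_simps)
qed

lemma Pterm_right:
  assumes C: "\<forall>t. 0 \<le> t \<longrightarrow> t < 1 \<longrightarrow> \<bar>P t\<bar> \<le> C * (1 - t)" and t: "0 \<le> t" "t < 1"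
    and b: "b \<ge> \<alpha> - c\<^sup>2 / 4"
  shows "inverse b * (P t)\<^sup>2 \<le> C\<^sup>2 / (\<alpha> - c\<^sup>2 / 4) * (1 - t)"
proof -
  have g: "\<alpha> - c\<^sup>2 / 4 > 0" by (rule gam_pos)
  have P1: "\<bar>P t\<bar> \<le> C * (1 - t)" using C t by auto
  have "(P t)\<^sup>2 = \<bar>P t\<bar>\<^sup>2" by simp
  also have "\<dots> \<le> (C * (1 - t))\<^sup>2" by (rule power_mono[OF P1]) simp
  also have "\<dots> = C\<^sup>2 * (1 - t) * (1 - t)" by (simp add: power2_eq_square algebra_simps)
  also have "\<dots> \<le> C\<^sup>2 * (1 - t) * 1" using t by (intro mult_left_mono) auto
  finally have P2: "(P t)\<^sup>2 \<le> C\<^sup>2 * (1 - t)" by simp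
  have "inverse b \<le> inverse (\<alpha> - c\<^sup>2 / 4)" using b g by (intro le_imp_inverse_le) auto
  then have "inverse b * (P t)\<^sup>2 \<le> inverse (\<alpha> - c\<^sup>2 / 4) * (C\<^sup>2 * (1 - t))"
    using P2 b g by (intro mult_mono) auto
  then show ?thesis by (simp add: field_simps)
qed

lemma G_right: "\<exists>K. \<forall>t. 0 \<le> t \<longrightarrow> t < 1 \<longrightarrow> G t \<le> K * (1 - t)"
proof -
  obtain C where C: "\<forall>t. 0 \<le> t \<longrightarrow> t < 1 \<longrightarrow> \<bar>P t\<bar> \<le> C * (1 - t)" using P_bound_right by blast
  have "G t \<le> (2 powr p * M\<^sup>2 + C\<^sup>2 / (\<alpha> - c\<^sup>2 / 4)) * (1 - t)" if t: "0 \<le> t" "t < 1" for t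
  proof -
    have "bt t * e t \<ge> bt t * 1" using bt_pos'[of t] e_ge1[of t] t by (intro mult_left_mono) auto
    then have b: "bt t * e t \<ge> \<alpha> - c\<^sup>2 / 4" using bt_pos[of t] t by linarith
    show ?thesis unfolding G_def using Aphi_right[OF t] Pterm_right[OF C t b]
      by (simp add: algebra_simps)
  qed
  then show ?thesis by blast
qed

lemma F0_right: "\<exists>K. \<forall>t. 0 \<le> t \<longrightarrow> t < 1 \<longrightarrow> F0 t \<le> K * (1 - t)"
proof -
  obtain C where C: "\<forall>t. 0 \<le> t \<longrightarrow> t < 1 \<longrightarrow> \<bar>P t\<bar> \<le> C * (1 - t)" using P_bound_right by blast
  have "F0 t \<le> (2 powr p * M\<^sup>2 * 2 powr (p - 1) + C\<^sup>2 / (\<alpha> - c\<^sup>2 / 4)) * (1 - t)" if t: "0 \<le> t" "t < 1" for t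
  proof -
    have b: "bt t \<ge> \<alpha> - c\<^sup>2 / 4" using bt_pos[of t] t by linarith
    have "A t * e t * (\<phi> t)\<^sup>2 = (A t * (\<phi> t)\<^sup>2) * e t" by (simp add: algebra_simps)
    also have "\<dots> \<le> (2 powr p * M\<^sup>2 * (1 - t)) * 2 powr (p - 1)"
      by (rule mult_mono) (use Aphi_right[OF t] e_le[of t] e_pos[of t] t in auto)
    finally have a: "A t * e t * (\<phi> t)\<^sup>2 \<le> 2 powr p * M\<^sup>2 * 2 powr (p - 1) * (1 - t)"
      by (simp add: algebra_simps)
    show ?thesis unfolding F0_def using a Pterm_right[OF C t b]
      by (simp add: algebra_simps)
  qed
  then show ?thesis by blast
qed

lemma G_left: "\<exists>K. \<forall>t. -1 < t \<longrightarrow> t \<le> 0 \<longrightarrow> G t \<le> K * (1 + t)"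
proof -
  obtain C where C0: "C \<ge> 0" and C: "\<forall>t. -1 < t \<longrightarrow> t \<le> 0 \<longrightarrow> \<bar>P t\<bar> \<le> C * (1 + t) powr p"
    using P_bound_left by blast
  have g: "\<alpha> - c\<^sup>2 / 4 > 0" by (rule gam_pos)
  have "G t \<le> (2 * M\<^sup>2 + C\<^sup>2 / (\<alpha> - c\<^sup>2 / 4)) * (1 + t)" if t: "-1 < t" "t \<le> 0" for t
  proof -
    have et: "e t > 0" using e_pos t by auto
    have q: "(1 + t) * e t \<le> 1" using powr_p[of t] t powr_le1[of p "1 + t"] p_gt by auto
    have q0: "0 \<le> (1 + t) * e t" using et t by simp
    have P1: "\<bar>P t\<bar> \<le> C * ((1 + t) * e t)" using C t powr_p[of t] by auto
    have "(P t)\<^sup>2 = \<bar>P t\<bar>\<^sup>2" by simp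
    also have "\<dots> \<le> (C * ((1 + t) * e t))\<^sup>2" by (rule power_mono[OF P1]) simp
    finally have P2: "(P t)\<^sup>2 \<le> C\<^sup>2 * ((1 + t) * e t) * ((1 + t) * e t)"
      by (simp add: power2_eq_square algebra_simps)
    have "bt t * e t \<ge> (\<alpha> - c\<^sup>2 / 4) * e t" using bt_pos[of t] et t by (intro mult_right_mono) auto
    then have ib: "inverse (bt t * e t) \<le> inverse ((\<alpha> - c\<^sup>2 / 4) * e t)"
      using g et by (intro le_imp_inverse_le) auto
    have "inverse (bt t * e t) * (P t)\<^sup>2 \<le> inverse ((\<alpha> - c\<^sup>2 / 4) * e t) * (C\<^sup>2 * ((1 + t) * e t) * ((1 + t) * e t))"
    proof (rule mult_mono[OF ib P2])
      show "0 \<le> inverse ((\<alpha> - c\<^sup>2 / 4) * e t)" using g et by simp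
    qed simp
    also have "\<dots> = C\<^sup>2 / (\<alpha> - c\<^sup>2 / 4) * (1 + t) * ((1 + t) * e t)"
      using g et by (simp add: field_simps power2_eq_square)
    also have "\<dots> \<le> C\<^sup>2 / (\<alpha> - c\<^sup>2 / 4) * (1 + t) * 1"
      using q g t by (intro mult_left_mono) auto
    finally have "inverse (bt t * e t) * (P t)\<^sup>2 \<le> C\<^sup>2 / (\<alpha> - c\<^sup>2 / 4) * (1 + t)" by simp
    then show ?thesis unfolding G_def using Aphi_left[OF t]
      by (simp add: algebra_simps)
  qed
  then show ?thesis by blast
qed


lemma A_e: "-1 < x \<Longrightarrow> A x = (1 - x) * (1 + x) * e x"
  unfolding A_def using powr_p[of x] by simp

lemma B1_eq: "-1 < x \<Longrightarrow> B1 x = e x * ((p - 1) * bt x - (1 + x) * c\<^sup>2 / 8) / (1 + x)"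
  unfolding B1_def by (simp add: field_simps)

lemma B1_nonpos: "-1 < x \<Longrightarrow> (p - 1) * bt x \<le> (1 + x) * c\<^sup>2 / 8 \<Longrightarrow> B1 x \<le> 0"
  using B1_eq[of x] e_pos[of x] by (simp add: divide_nonpos_pos mult_nonneg_nonpos)

lemma B1_nonneg: "-1 < x \<Longrightarrow> (p - 1) * bt x \<ge> (1 + x) * c\<^sup>2 / 8 \<Longrightarrow> B1 x \<ge> 0"
  using B1_eq[of x] e_pos[of x] by simp

lemma bt_mono: "x \<le> y \<Longrightarrow> bt y \<le> bt x"
  unfolding bt_def by (simp add: mult_left_mono divide_right_mono)

lemma fw_eq: "fw x = e x * (\<phi> x)\<^sup>2" unfolding fw_def e_def by simp

lemma U1:
  assumes eta: "-1 < \<eta>" "\<eta> < 1" and cond: "(p - 1) * bt \<eta> \<le> (1 + \<eta>) * c\<^sup>2 / 8"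
  shows "A \<eta> * (\<phi> \<eta>)\<^sup>2 \<le> 2 * (I - Y \<eta>)"
proof -
  have mono: "G \<eta> + 2 * Y \<eta> \<le> G t + 2 * Y t" if t: "\<eta> \<le> t" "t < 1" for t
  proof (rule deriv_nonneg_imp_mono[OF _ _ t(1)])
    fix x assume x: "x \<in> {\<eta>..t}"
    then have x': "-1 < x" "x < 1" "\<eta> \<le> x" using t eta by auto
    show "((\<lambda>u. G u + 2 * Y u) has_real_derivative
        (e x * (p - 1 - (p + 1) * x) * (\<phi> x)\<^sup>2
         + (- (B1 x * inverse ((bt x * e x) ^ Suc (Suc 0)))) * (P x)\<^sup>2) + 2 * fw x) (at x)"
      by (rule DERIV_add[OF dG[OF x'(1,2)] DERIV_cmult[OF dY[OF x'(1,2)]]])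
    have "(p - 1) * bt x \<le> (p - 1) * bt \<eta>" using bt_mono[OF x'(3)] p_gt by (intro mult_left_mono) auto
    also have "\<dots> \<le> (1 + \<eta>) * c\<^sup>2 / 8" by (rule cond)
    also have "\<dots> \<le> (1 + x) * c\<^sup>2 / 8" using x' by (intro divide_right_mono mult_right_mono) auto
    finally have "B1 x \<le> 0" using B1_nonpos x' by blast
    then have s1: "0 \<le> (- (B1 x * inverse ((bt x * e x) ^ Suc (Suc 0)))) * (P x)\<^sup>2"
      by (intro mult_nonneg_nonneg) (auto simp: mult_nonpos_nonneg)
    have "0 \<le> e x * ((p + 1) * (1 - x)) * (\<phi> x)\<^sup>2"
      using e_pos[of x] x' p_gt by (intro mult_nonneg_nonneg) auto
    then have s2: "0 \<le> e x * (p - 1 - (p + 1) * x) * (\<phi> x)\<^sup>2 + 2 * fw x"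
      unfolding fw_eq by (simp add: algebra_simps)
    show "0 \<le> e x * (p - 1 - (p + 1) * x) * (\<phi> x)\<^sup>2
         + (- (B1 x * inverse ((bt x * e x) ^ Suc (Suc 0)))) * (P x)\<^sup>2 + 2 * fw x"
      using s1 s2 by linarith
  qed
  obtain K where K: "\<forall>t. 0 \<le> t \<longrightarrow> t < 1 \<longrightarrow> G t \<le> K * (1 - t)" using G_right by blast
  have "G \<eta> + 2 * Y \<eta> \<le> 2 * I"
  proof (rule lim_right[of "max \<eta> 0"])
    show "max \<eta> 0 < 1" using eta by auto
    fix t assume t: "max \<eta> 0 \<le> t" "t < 1"
    have "G \<eta> + 2 * Y \<eta> \<le> G t + 2 * Y t" using mono t by auto
    moreover have "Y t \<le> I" using Y_le t eta by auto
    moreover have "G t \<le> K * (1 - t)" using K t by auto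
    ultimately show "G \<eta> + 2 * Y \<eta> \<le> K * (1 - t) + 2 * I" by linarith
  qed
  moreover have "0 \<le> inverse (bt \<eta> * e \<eta>) * (P \<eta>)\<^sup>2"
    using bt_pos'[of \<eta>] e_pos[of \<eta>] eta by simp
  ultimately show ?thesis unfolding G_def right_diff_distrib by linarith
qed

lemma L1:
  assumes eta: "-1 < \<eta>" "\<eta> < 1" and cond: "(p - 1) * bt \<eta> \<ge> (1 + \<eta>) * c\<^sup>2 / 8"
  shows "A \<eta> * (\<phi> \<eta>)\<^sup>2 \<le> 2 * p * Y \<eta>"
proof -
  have mono: "2 * p * Y t - G t \<le> 2 * p * Y \<eta> - G \<eta>" if t: "-1 < t" "t \<le> \<eta>" for t
  proof (rule deriv_nonneg_imp_mono[OF _ _ t(2)])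
    fix x assume x: "x \<in> {t..\<eta>}"
    then have x': "-1 < x" "x < 1" "x \<le> \<eta>" using t eta by auto
    show "((\<lambda>u. 2 * p * Y u - G u) has_real_derivative
        2 * p * fw x - (e x * (p - 1 - (p + 1) * x) * (\<phi> x)\<^sup>2
         + (- (B1 x * inverse ((bt x * e x) ^ Suc (Suc 0)))) * (P x)\<^sup>2)) (at x)"
      by (rule DERIV_diff[OF DERIV_cmult[OF dY[OF x'(1,2)]] dG[OF x'(1,2)]])
    have "(1 + x) * c\<^sup>2 / 8 \<le> (1 + \<eta>) * c\<^sup>2 / 8" using x' by (intro divide_right_mono mult_right_mono) auto
    also have "\<dots> \<le> (p - 1) * bt \<eta>" by (rule cond)
    also have "\<dots> \<le> (p - 1) * bt x" using bt_mono[OF x'(3)] p_gt by (intro mult_left_mono) auto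
    finally have "B1 x \<ge> 0" using B1_nonneg x' by blast
    then have s1: "(- (B1 x * inverse ((bt x * e x) ^ Suc (Suc 0)))) * (P x)\<^sup>2 \<le> 0"
      by (intro mult_nonpos_nonneg) auto
    have "0 \<le> e x * ((p + 1) * (1 + x)) * (\<phi> x)\<^sup>2"
      using e_pos[of x] x' p_gt by (intro mult_nonneg_nonneg) auto
    then have s2: "0 \<le> 2 * p * fw x - e x * (p - 1 - (p + 1) * x) * (\<phi> x)\<^sup>2"
      unfolding fw_eq by (simp add: algebra_simps)
    show "0 \<le> 2 * p * fw x - (e x * (p - 1 - (p + 1) * x) * (\<phi> x)\<^sup>2
         + (- (B1 x * inverse ((bt x * e x) ^ Suc (Suc 0)))) * (P x)\<^sup>2)"
      using s1 s2 by linarith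
  qed
  obtain K where K: "\<forall>t. -1 < t \<longrightarrow> t \<le> 0 \<longrightarrow> G t \<le> K * (1 + t)" using G_left by blast
  have "G \<eta> \<le> 2 * p * Y \<eta>"
  proof (rule lim_left[of "min \<eta> 0"])
    show "-1 < min \<eta> 0" using eta by auto
    fix t assume t: "-1 < t" "t \<le> min \<eta> 0"
    have "2 * p * Y t - G t \<le> 2 * p * Y \<eta> - G \<eta>" using mono t by auto
    moreover have "0 \<le> Y t" using Y_nonneg t eta by auto
    moreover have "G t \<le> K * (1 + t)" using K t by auto
    moreover have "0 \<le> 2 * p * Y t" using \<open>0 \<le> Y t\<close> p_gt by simp
    ultimately show "G \<eta> \<le> K * (1 + t) + 2 * p * Y \<eta>" by linarith
  qed
  moreover have "0 \<le> inverse (bt \<eta> * e \<eta>) * (P \<eta>)\<^sup>2"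
    using bt_pos'[of \<eta>] e_pos[of \<eta>] eta by simp
  ultimately show ?thesis unfolding G_def by linarith
qed

lemma U0:
  assumes eta: "-1 < \<eta>" "\<eta> < 1"
  shows "A \<eta> * e \<eta> * (\<phi> \<eta>)\<^sup>2 \<le> 2 powr p * (I - Y \<eta>)"
proof -
  have two: "2 * 2 powr (p - 1) = (2::real) powr p"
    by (simp add: powr_diff)
  have mono: "F0 \<eta> + 2 powr p * Y \<eta> \<le> F0 t + 2 powr p * Y t" if t: "\<eta> \<le> t" "t < 1" for t
  proof (rule deriv_nonneg_imp_mono[OF _ _ t(1)])
    fix x assume x: "x \<in> {\<eta>..t}"
    then have x': "-1 < x" "x < 1" "\<eta> \<le> x" using t eta by auto
    show "((\<lambda>u. F0 u + 2 powr p * Y u) has_real_derivative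
        ((e x * (p - 1 - (p + 1) * x) * e x + ((p - 1) * e x / (1 + x)) * A x) * (\<phi> x)\<^sup>2
     + (- (- (c\<^sup>2 / 8) * inverse (bt x ^ Suc (Suc 0)))) * (P x)\<^sup>2) + 2 powr p * fw x) (at x)"
      by (rule DERIV_add[OF dF0[OF x'(1,2)] DERIV_cmult[OF dY[OF x'(1,2)]]])
    have s1: "0 \<le> (- (- (c\<^sup>2 / 8) * inverse (bt x ^ Suc (Suc 0)))) * (P x)\<^sup>2"
      by simp
    have R: "e x * (p - 1 - (p + 1) * x) * e x + ((p - 1) * e x / (1 + x)) * A x
        = e x * e x * (2 * p * (1 - x) - 2)"
      unfolding A_e[OF x'(1)] using x' by (simp add: field_simps)
    have "e x * e x * (2 * p * (1 - x) - 2) + 2 powr p * e x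
        = e x * (e x * (2 * p * (1 - x)) + 2 * (2 powr (p - 1) - e x))"
      using two by (simp add: algebra_simps)
    also have "\<dots> \<ge> 0" using e_pos[of x] e_le[of x] x' p_gt
      by (intro mult_nonneg_nonneg add_nonneg_nonneg) auto
    finally have "0 \<le> (e x * e x * (2 * p * (1 - x) - 2) + 2 powr p * e x) * (\<phi> x)\<^sup>2" by simp
    then have s2: "0 \<le> (e x * (p - 1 - (p + 1) * x) * e x + ((p - 1) * e x / (1 + x)) * A x) * (\<phi> x)\<^sup>2
       + 2 powr p * fw x"
      unfolding R fw_eq by (simp add: algebra_simps)
    show "0 \<le> (e x * (p - 1 - (p + 1) * x) * e x + ((p - 1) * e x / (1 + x)) * A x) * (\<phi> x)\<^sup>2
     + (- (- (c\<^sup>2 / 8) * inverse (bt x ^ Suc (Suc 0)))) * (P x)\<^sup>2 + 2 powr p * fw x"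
      using s1 s2 by linarith
  qed
  obtain K where K: "\<forall>t. 0 \<le> t \<longrightarrow> t < 1 \<longrightarrow> F0 t \<le> K * (1 - t)" using F0_right by blast
  have "F0 \<eta> + 2 powr p * Y \<eta> \<le> 2 powr p * I"
  proof (rule lim_right[of "max \<eta> 0"])
    show "max \<eta> 0 < 1" using eta by auto
    fix t assume t: "max \<eta> 0 \<le> t" "t < 1"
    have "F0 \<eta> + 2 powr p * Y \<eta> \<le> F0 t + 2 powr p * Y t" using mono t by auto
    moreover have "2 powr p * Y t \<le> 2 powr p * I" using Y_le t eta by auto
    moreover have "F0 t \<le> K * (1 - t)" using K t by auto
    ultimately show "F0 \<eta> + 2 powr p * Y \<eta> \<le> K * (1 - t) + 2 powr p * I" by linarith
  qed
  moreover have "0 \<le> inverse (bt \<eta>) * (P \<eta>)\<^sup>2"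
    using bt_pos'[of \<eta>] eta by simp
  ultimately show ?thesis unfolding F0_def by (simp add: algebra_simps)
qed


lemma final:
  assumes pc: "p = 3/2 \<or> p \<ge> 2" and Ieq: "I = 2 powr (p - 1)" and eta: "0 \<le> \<eta>" "\<eta> < 1"
  shows "A \<eta> * (\<phi> \<eta>)\<^sup>2 \<le> 2 powr (p + 1) * (p - 1)"
proof -
  have eta': "-1 < \<eta>" "\<eta> < 1" using eta by auto
  have Y0: "0 \<le> Y \<eta>" and YI: "Y \<eta> \<le> I" using Y_nonneg[of \<eta>] Y_le[of \<eta>] eta by auto
  have two: "2 * 2 powr (p - 1) = (2::real) powr p" by (simp add: powr_diff)
  have two': "(2::real) powr (p + 1) = 2 * 2 powr p" by (simp add: powr_add)
  have pp: "(2::real) powr p > 0" by simp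
  have p32: "p \<ge> 3/2" using pc by auto
  show ?thesis
  proof (cases "(p - 1) * bt \<eta> \<le> (1 + \<eta>) * c\<^sup>2 / 8")
    case True
    have "A \<eta> * (\<phi> \<eta>)\<^sup>2 \<le> 2 * (I - Y \<eta>)" by (rule U1[OF eta' True])
    also have "\<dots> \<le> 2 powr p" using Y0 Ieq two by simp
    also have "\<dots> \<le> 2 powr p * (2 * (p - 1))" using pp p32 by (simp add: mult_le_cancel_left1)
    also have "\<dots> = 2 powr (p + 1) * (p - 1)" using two' by simp
    finally show ?thesis .
  next
    case False
    then have c2: "(p - 1) * bt \<eta> \<ge> (1 + \<eta>) * c\<^sup>2 / 8" by simp
    have L: "A \<eta> * (\<phi> \<eta>)\<^sup>2 \<le> 2 * p * Y \<eta>" by (rule L1[OF eta' c2])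
    show ?thesis
    proof (cases "p \<ge> 2")
      case True
      have "2 * p * Y \<eta> \<le> 2 * p * I" using YI p_gt by (intro mult_left_mono) auto
      then have "A \<eta> * (\<phi> \<eta>)\<^sup>2 \<le> 2 * p * I" using L by linarith
      also have "\<dots> = p * 2 powr p" using Ieq two by simp
      also have "\<dots> \<le> 2 powr p * (2 * (p - 1))" using pp True by (simp add: mult.commute)
      also have "\<dots> = 2 powr (p + 1) * (p - 1)" using two' by simp
      finally show ?thesis .
    next
      case False
      then have p3: "p = 3/2" using pc by auto
      define V where "V = A \<eta> * (\<phi> \<eta>)\<^sup>2"
      have V0: "0 \<le> V" unfolding V_def using A_pos[OF eta'] by simp
      have "V \<le> V * e \<eta>" using V0 e_ge1[OF eta(1)] by (simp add: mult_le_cancel_left1)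
      also have "\<dots> \<le> 2 powr p * (I - Y \<eta>)" using U0[OF eta'] unfolding V_def by (simp add: algebra_simps)
      finally have U: "V \<le> 2 powr p * (I - Y \<eta>)" .
      have "2 * p * Y \<eta> = 3 * Y \<eta>" using p3 by simp
      then have LV: "V \<le> 3 * Y \<eta>" using L unfolding V_def by linarith
      define s where "s = sqrt 2"
      have ss: "s * s = 2" "s > 1" unfolding s_def by auto
      have Is: "I = s" using Ieq p3 unfolding s_def by (simp add: powr_half_sqrt)
      have ps: "(2::real) powr p = 2 * s" using two Ieq Is by simp
      have pm: "p - 1 = 1/2" using p3 by simp
      have "2 powr (p + 1) * (p - 1) = 2 * (2 * s) * (1/2)" by (simp only: two' ps pm)
      then have tg: "2 powr (p + 1) * (p - 1) = 2 * s" by simp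
      have "2 * s * (s - Y \<eta>) \<le> 2 * s * (s - V / 3)" using LV ss(2) by (intro mult_left_mono) auto
      then have "V \<le> 2 * s * (s - V / 3)" using U ps Is by simp
      also have "\<dots> = 2 * (s * s) - 2 * s * V / 3" by (simp add: algebra_simps)
      finally have V1: "V * (3 + 2 * s) \<le> 12" using ss(1) by (simp add: algebra_simps)
      have "V \<le> 2 * s"
      proof (rule ccontr)
        assume "\<not> V \<le> 2 * s"
        then have "2 * s * (3 + 2 * s) < V * (3 + 2 * s)" using ss(2) by (intro mult_strict_right_mono) auto
        moreover have "2 * s * (3 + 2 * s) = 6 * s + 4 * (s * s)" by (simp add: algebra_simps)
        ultimately show False using V1 ss by linarith
      qed
      then show ?thesis unfolding tg V_def .
    qed
  qed
qed

end

theorem lemma3p7: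
  fixes c \<alpha> :: real and d m :: nat and \<phi> \<phi>' :: "real \<Rightarrow> real"
  assumes c_pos: "c > 0"
    and d_ge: "d \<ge> 2"
    and md: "real m + real d / 2 > 1"
    and bdd: "bounded (\<phi> ` {-1..1})"
    and deriv1: "\<forall>\<eta>\<in>{-1<..<1}. (\<phi> has_real_derivative \<phi>' \<eta>) (at \<eta>)"
    and ode: "\<forall>\<eta>\<in>{-1<..<1}.
      ((\<lambda>t. (1 - t) * (1 + t) powr (real m + real d / 2) * \<phi>' t) has_real_derivative
         (- ((\<alpha> - c\<^sup>2 * (1 + \<eta>) / 8) * (1 + \<eta>) powr (real m + real d / 2 - 1) * \<phi> \<eta>))) (at \<eta>)"
    and norm: "((\<lambda>t. (1 + t) powr (real m + real d / 2 - 1) * \<bar>\<phi> t\<bar>\<^sup>2) has_integral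
                 2 powr (real m + real d / 2 - 1)) {-1..1}"
    and alpha_gt: "\<alpha> > c\<^sup>2 / 4"
  shows "\<forall>\<eta>\<in>{(2 * real m + real d - 2) / (2 * real m + real d)..1}.
           sqrt ((1 - \<eta>) * (1 + \<eta>) powr (real m + real d / 2)) * \<bar>\<phi> \<eta>\<bar>
             \<le> sqrt (2 powr (real m + real d / 2 + 1) * (real m + real d / 2 - 1))"
proof
  fix \<eta> assume eta: "\<eta> \<in> {(2 * real m + real d - 2) / (2 * real m + real d)..1}"
  obtain M where M: "\<forall>x\<in>\<phi> ` {-1..1}. norm x \<le> M" using bdd unfolding bounded_iff by blast
  then have Mb: "\<forall>t\<in>{-1..1}. \<bar>\<phi> t\<bar> \<le> M" by auto
  interpret bp c \<alpha> "real m + real d / 2" M "2 powr (real m + real d / 2 - 1)" \<phi> \<phi>'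
    by unfold_locales (use md alpha_gt Mb deriv1 ode norm in auto)
  have h: "real (2 * m + d) > 2" using md by simp
  then have n3: "2 * m + d \<ge> 3" by linarith
  have pc: "real m + real d / 2 = 3/2 \<or> real m + real d / 2 \<ge> 2"
  proof (cases "2 * m + d = 3")
    case True
    then have "real (2 * m + d) = 3" by simp
    then show ?thesis by simp
  next
    case False
    then have "2 * m + d \<ge> 4" using n3 by linarith
    then have "real (2 * m + d) \<ge> 4" by linarith
    then show ?thesis by simp
  qed
  have den: "2 * real m + real d \<ge> 3" using n3 by linarith
  have "0 \<le> (2 * real m + real d - 2) / (2 * real m + real d)" using den by simp
  then have e0: "0 \<le> \<eta>" "\<eta> \<le> 1" using eta by auto
  have rhs0: "0 \<le> sqrt (2 powr (real m + real d / 2 + 1) * (real m + real d / 2 - 1))"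
    using md by simp
  show "sqrt ((1 - \<eta>) * (1 + \<eta>) powr (real m + real d / 2)) * \<bar>\<phi> \<eta>\<bar>
             \<le> sqrt (2 powr (real m + real d / 2 + 1) * (real m + real d / 2 - 1))"
  proof (cases "\<eta> = 1")
    case True
    then show ?thesis using rhs0 by simp
  next
    case False
    then have e1: "\<eta> < 1" using e0 by auto
    have fin: "A \<eta> * (\<phi> \<eta>)\<^sup>2 \<le> 2 powr (real m + real d / 2 + 1) * (real m + real d / 2 - 1)"
      by (rule final[OF pc refl e0(1) e1])
    have "sqrt ((1 - \<eta>) * (1 + \<eta>) powr (real m + real d / 2)) * \<bar>\<phi> \<eta>\<bar>
        = sqrt (A \<eta> * (\<phi> \<eta>)\<^sup>2)"
      unfolding A_def by (simp add: real_sqrt_mult)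
    also have "\<dots> \<le> sqrt (2 powr (real m + real d / 2 + 1) * (real m + real d / 2 - 1))"
      by (rule real_sqrt_le_mono[OF fin])
    finally show ?thesis .
  qed
qed

end
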